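(* Consider the planar Maxwell-ring potential described in the context with $\mu=0$ and $\alpha\ge 1$. Then the origin $u_0=0$ is a critical point of $V$. Moreover, for $n\ge3$, $D^2V(0)=\lambda I$ for some $\lambda>0$.
   Context: Let $n\ge 2$, $\zeta=2\pi/n$, $\mu\ge0$, $\phi_\alpha'(r)=-r^{-\alpha}$, and $s=2^{-\alpha}\sum_{j=1}^{n-1}\sin^{-(\alpha-1)}(j\zeta/2)$. The (rescaled) planar potential of a satellite attracted by $n$ unit masses at the vertices $e^{ij\zeta}$ of a regular polygon and a central mass $\mu$ at $0$ (identifying $\mathbb{R}^2=\mathbb{C}$) is $$V(u)=\frac12\|u\|^2+\sum_{j=1}^n\frac1{s+\mu}\phi_\alpha(\|u-e^{ij\zeta}\|)+\frac{\mu}{s+\mu}\phi_\alpha(\|u\|);$$ for $\mu=0$ the last term is absent. *)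

theory Defs
  imports "HOL-Analysis.Analysis"
begin

text \<open>A primitive of phi_alpha' r = - r^(-alpha) (additive constant irrelevant).\<close>
definition phi :: "real \<Rightarrow> real \<Rightarrow> real" where
  "phi \<alpha> r = (if \<alpha> = 1 then - ln r else r powr (1 - \<alpha>) / (\<alpha> - 1))"

definition zeta :: "nat \<Rightarrow> real" where
  "zeta n = 2 * pi / real n"

definition sconst :: "nat \<Rightarrow> real \<Rightarrow> real" where
  "sconst n \<alpha> = 2 powr (- \<alpha>) *
     (\<Sum>j = 1..n - 1. sin (real j * zeta n / 2) powr (- (\<alpha> - 1)))"

definition maxwellV :: "nat \<Rightarrow> real \<Rightarrow> real \<Rightarrow> complex \<Rightarrow> real" where
  "maxwellV n \<alpha> \<mu> u =
     1/2 * (norm u)\<^sup>2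
     + (\<Sum>j = 1..n. phi \<alpha> (norm (u - cis (real j * zeta n))) / (sconst n \<alpha> + \<mu>))
     + (if \<mu> = 0 then 0 else \<mu> / (sconst n \<alpha> + \<mu>) * phi \<alpha> (norm u))"

end

theory Submission
  imports Defs
begin

lemma dn: fixes w :: complex assumes "u \<noteq> w"
  shows "((\<lambda>u. norm (u - w)) has_derivative (\<lambda>h. h \<bullet> sgn (u - w))) (at u)"
proof -
  have "((\<lambda>u. u - w) has_derivative (\<lambda>h. h)) (at u)" by (auto intro!: derivative_eq_intros)
  from has_derivative_compose[OF this has_derivative_norm] assms show ?thesis by simp
qed

lemma dphi: assumes "r > 0"
  shows "(phi \<alpha> has_real_derivative -(r powr -\<alpha>)) (at r)"
proof (cases "\<alpha> = 1")
  case True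
  have e: "phi \<alpha> = (\<lambda>r. - ln r)" using True by (auto simp: phi_def)
  show ?thesis unfolding e using assms True
    by (auto intro!: derivative_eq_intros simp: powr_minus divide_simps)
next
  case False
  have e: "phi \<alpha> = (\<lambda>r. r powr (1 - \<alpha>) / (\<alpha> - 1))" using False by (auto simp: phi_def)
  have d: "\<alpha> - 1 \<noteq> 0" using False by simp
  have q: "(1 - \<alpha>) * r powr - \<alpha> / (\<alpha> - 1) = -(r powr -\<alpha>)"
  proof -
    have "(1 - \<alpha>) * r powr - \<alpha> / (\<alpha> - 1) = - ((\<alpha> - 1) * r powr - \<alpha> / (\<alpha> - 1))"
      by (simp add: algebra_simps minus_divide_left)
    then show ?thesis using d by simp
  qed
  show ?thesis unfolding e using assms
    using DERIV_cdivide[OF has_real_derivative_powr[OF assms, of "1 - \<alpha>"], of "\<alpha> - 1"] q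
    by simp
qed

lemma dterm: fixes w :: complex assumes "u \<noteq> w"
  shows "((\<lambda>u. phi \<alpha> (norm (u - w))) has_derivative
     (\<lambda>h. (-(norm (u - w) powr (-\<alpha>-1)) *\<^sub>R (u - w)) \<bullet> h)) (at u)"
proof -
  have r: "norm (u - w) > 0" using assms by simp
  have "((\<lambda>u. phi \<alpha> (norm (u - w))) has_derivative
     (\<lambda>h. -(norm (u - w) powr -\<alpha>) * (h \<bullet> sgn (u - w)))) (at u)"
    using has_derivative_compose[OF dn[OF assms] dphi[OF r, unfolded has_field_derivative_def]] by simp
  moreover have "(\<lambda>h. -(norm (u - w) powr -\<alpha>) * (h \<bullet> sgn (u - w))) =
     (\<lambda>h. (-(norm (u - w) powr (-\<alpha>-1)) *\<^sub>R (u - w)) \<bullet> h)"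
  proof
    fix h
    have "norm (u - w) powr (-\<alpha>-1) = norm (u - w) powr -\<alpha> / norm (u - w)"
      using r by (simp add: powr_diff)
    then show "-(norm (u - w) powr -\<alpha>) * (h \<bullet> sgn (u - w)) =
       (-(norm (u - w) powr (-\<alpha>-1)) *\<^sub>R (u - w)) \<bullet> h"
      by (simp add: sgn_div_norm inner_commute divide_simps)
  qed
  ultimately show ?thesis by simp
qed

lemma dg: fixes w :: complex assumes "u \<noteq> w"
  shows "((\<lambda>u. (-(norm (u - w) powr (-\<alpha>-1))) *\<^sub>R (u - w)) has_derivative
     (\<lambda>h. (-(norm (u - w) powr (-\<alpha>-1))) *\<^sub>R h
        + ((\<alpha>+1) * norm (u - w) powr (-\<alpha>-3) * ((u - w) \<bullet> h)) *\<^sub>R (u - w))) (at u)"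
proof -
  have r: "norm (u - w) > 0" using assms by simp
  show ?thesis
    apply (rule has_derivative_eq_rhs)
     apply (rule derivative_eq_intros dn[OF assms] refl)+
    using r apply simp_all
     prefer 2 apply (auto intro!: derivative_eq_intros)[1]
    apply (rule ext)
    subgoal for h
    proof -
      have "cmod (u - w) powr (- \<alpha> - 3) = cmod (u - w) powr (- \<alpha> - 1) / cmod (u - w) / cmod (u - w)"
      proof -
        have "- \<alpha> - 3 = (- \<alpha> - 1) - 2" by simp
        then have "cmod (u - w) powr (- \<alpha> - 3) = cmod (u - w) powr (- \<alpha> - 1) / cmod (u - w) powr 2"
          by (metis powr_diff)
        then show ?thesis using r by (simp add: powr_numeral power2_eq_square)
      qed
      then show ?thesis using r by (simp add: sgn_div_norm inner_commute divide_simps algebra_simps)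
    qed
    done
qed

lemma cis_ne1: assumes "0 < x" "x < 2 * pi" shows "cis x \<noteq> 1"
proof
  assume "cis x = 1"
  then have c: "cos x = 1" by (simp add: complex_eq_iff)
  have "sin (x/2) > 0" using assms by (intro sin_gt_zero) auto
  moreover have "cos x = 1 - 2 * sin (x/2) ^ 2" using cos_double_sin[of "x/2"] by simp
  ultimately show False using c by simp
qed

lemma rootsum: assumes "1 \<le> k" "k < n"
  shows "(\<Sum>j = 1..n. (cis (real j * zeta n)) ^ k) = 0"
proof -
  define z where "z = cis (real k * zeta n)"
  have n0: "real n > 0" using assms by simp
  have t: "cis (real j * zeta n) ^ k = z ^ j" for j
    unfolding z_def by (simp only: Complex.DeMoivre) (simp add: mult_ac)
  have "z ^ n = cis (real n * (real k * zeta n))" by (simp add: z_def Complex.DeMoivre)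
  also have "real n * (real k * zeta n) = real k * (2 * pi)" using n0 by (simp add: zeta_def)
  also have "cis (real k * (2 * pi)) = 1" by (simp add: Complex.DeMoivre[symmetric])
  finally have zn: "z ^ n = 1" .
  have "z \<noteq> 1" unfolding z_def
  proof (rule cis_ne1)
    show "0 < real k * zeta n" using assms n0 by (simp add: zeta_def)
    have "real k / real n < 1" using assms by simp
    then show "real k * zeta n < 2 * pi" using n0 by (simp add: zeta_def field_simps)
  qed
  then have "(\<Sum>j = 1..n. z ^ j) = (z - z ^ Suc n) / (1 - z)" using assms
    by (subst sum_gp) auto
  also have "z ^ Suc n = z" using zn by simp
  finally show ?thesis by (simp add: t)
qed

lemma sconst_pos: assumes "n \<ge> 2" shows "sconst n \<alpha> > 0"
proof -
  have "(\<Sum>j = 1..n - 1. sin (real j * zeta n / 2) powr (- (\<alpha> - 1))) > 0"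
  proof (rule sum_pos)
    show "finite {1..n-1}" by simp
    show "{1..n-1} \<noteq> {}" using assms by simp
    fix j assume j: "j \<in> {1..n-1}"
    have "sin (real j * zeta n / 2) > 0"
    proof (rule sin_gt_zero)
      show "0 < real j * zeta n / 2" using j assms by (simp add: zeta_def)
      have "j < n" using j assms by auto
      then have "real j < real n" by simp
      then have "real j / real n < 1" using assms by simp
      then show "real j * zeta n / 2 < pi" using assms by (simp add: zeta_def field_simps)
    qed
    then show "sin (real j * zeta n / 2) powr (- (\<alpha> - 1)) > 0" by simp
  qed
  then show ?thesis unfolding sconst_def by simp
qed

lemma term_id: "(cis t \<bullet> h) *\<^sub>R cis t = (1/2) *\<^sub>R h + (1/2) *\<^sub>R (cis t ^ 2 * cnj h)"
proof -
  have s: "sin t * sin t = 1 - cos t * cos t" using sin_cos_squared_add[of t] by (simp add: power2_eq_square)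
  show ?thesis
    by (simp add: complex_eq_iff inner_complex_def Complex.DeMoivre cos_double sin_double algebra_simps power2_eq_square s)
qed

lemma key_id: assumes "n \<ge> 3"
  shows "(\<Sum>j = 1..n. (cis (real j * zeta n) \<bullet> h) *\<^sub>R cis (real j * zeta n)) = (real n / 2) *\<^sub>R h"
proof -
  have "(\<Sum>j = 1..n. (cis (real j * zeta n) \<bullet> h) *\<^sub>R cis (real j * zeta n))
     = (\<Sum>j = 1..n. (1/2) *\<^sub>R h + (1/2) *\<^sub>R (cis (real j * zeta n) ^ 2 * cnj h))"
    by (simp only: term_id)
  also have "\<dots> = of_nat n * ((1/2) *\<^sub>R h) + (1/2) *\<^sub>R ((\<Sum>j = 1..n. cis (real j * zeta n) ^ 2) * cnj h)"
    by (simp add: sum.distrib scaleR_sum_right sum_distrib_right)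
  also have "(\<Sum>j = 1..n. cis (real j * zeta n) ^ 2) = 0" using assms by (intro rootsum) auto
  finally show ?thesis by (simp add: complex_eq_iff)
qed

definition gr :: "real \<Rightarrow> complex \<Rightarrow> complex \<Rightarrow> complex" where
  "gr \<alpha> u w = (-(norm (u - w) powr (-\<alpha>-1))) *\<^sub>R (u - w)"

lemma dV: assumes "norm u < 1" "n \<ge> 2"
  shows "(maxwellV n \<alpha> 0 has_derivative
     (\<lambda>h. (u + (1 / sconst n \<alpha>) *\<^sub>R (\<Sum>j=1..n. gr \<alpha> u (cis (real j * zeta n)))) \<bullet> h)) (at u)"
proof -
  have e: "maxwellV n \<alpha> 0 = (\<lambda>u. 1/2 * (norm u)^2 + (\<Sum>j=1..n. phi \<alpha> (norm (u - cis (real j * zeta n))) / sconst n \<alpha>))"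
    by (auto simp: maxwellV_def fun_eq_iff)
  have ne: "u \<noteq> cis (real j * zeta n)" for j using assms by auto
  have s: "sconst n \<alpha> \<noteq> 0" using sconst_pos[OF assms(2), of \<alpha>] by simp
  show ?thesis unfolding e
    apply (rule has_derivative_eq_rhs)
     apply (auto intro!: derivative_eq_intros dterm ne simp: s)[1]
    apply (auto simp: s fun_eq_iff gr_def inner_add_left inner_sum_left sum_divide_distrib)
    done
qed

lemma dg0: "((\<lambda>u. gr \<alpha> u (cis t)) has_derivative (\<lambda>h. - h + ((\<alpha>+1) * (cis t \<bullet> h)) *\<^sub>R cis t)) (at 0)"
proof -
  have "(0::complex) \<noteq> cis t" by (metis norm_cis norm_zero zero_neq_one)
  from dg[OF this, of \<alpha>] show ?thesis unfolding gr_def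
    by (rule has_derivative_eq_rhs) (simp add: fun_eq_iff)
qed

theorem mainTheorem7:
  fixes n :: nat and \<alpha> :: real
  assumes "n \<ge> 2" and "\<alpha> \<ge> 1"
  shows "(maxwellV n \<alpha> 0 has_derivative (\<lambda>h. 0)) (at 0)
    \<and> (n \<ge> 3 \<longrightarrow>
        (\<exists>G :: complex \<Rightarrow> complex. \<exists>c :: real. c > 0 \<and>
           (\<forall>\<^sub>F u in nhds 0. (maxwellV n \<alpha> 0 has_derivative (\<lambda>h. G u \<bullet> h)) (at u)) \<and>
           (G has_derivative (\<lambda>h. c *\<^sub>R h)) (at 0)))"
proof
  define s where "s = sconst n \<alpha>"
  have spos: "s > 0" unfolding s_def using sconst_pos[OF assms(1), of \<alpha>] .
  define w where "w j = cis (real j * zeta n)" for j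
  have gr0: "gr \<alpha> 0 (w j) = w j" for j
    by (simp add: gr_def w_def)
  have sw: "(\<Sum>j=1..n. w j) = 0"
    using rootsum[of 1 n] assms by (simp add: w_def)
  show "(maxwellV n \<alpha> 0 has_derivative (\<lambda>h. 0)) (at 0)"
  proof -
    have sw': "(\<Sum>j=Suc 0..n. cis (real j * zeta n)) = 0" using sw by (simp add: w_def)
    show ?thesis using dV[of 0 n \<alpha>] assms by (simp add: gr0[unfolded w_def] sw')
  qed
  show "n \<ge> 3 \<longrightarrow>
        (\<exists>G :: complex \<Rightarrow> complex. \<exists>c :: real. c > 0 \<and>
           (\<forall>\<^sub>F u in nhds 0. (maxwellV n \<alpha> 0 has_derivative (\<lambda>h. G u \<bullet> h)) (at u)) \<and>
           (G has_derivative (\<lambda>h. c *\<^sub>R h)) (at 0))"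
  proof
    assume n3: "n \<ge> 3"
    define G where "G u = u + (1 / s) *\<^sub>R (\<Sum>j=1..n. gr \<alpha> u (w j))" for u
    define c where "c = 1 + (1/s) * (- real n + (\<alpha>+1) * (real n / 2))"
    have "(1/s) * (- real n + (\<alpha>+1) * (real n / 2)) \<ge> 0"
      using spos assms by (intro mult_nonneg_nonneg) auto
    then have cpos: "c > 0" unfolding c_def by simp
    have ev: "\<forall>\<^sub>F u in nhds 0. (maxwellV n \<alpha> 0 has_derivative (\<lambda>h. G u \<bullet> h)) (at u)"
    proof -
      have "\<forall>\<^sub>F u in nhds (0::complex). u \<in> ball 0 1"
        by (rule eventually_nhds_in_open) auto
      then show ?thesis
        by (rule eventually_mono) (use dV assms in \<open>auto simp: G_def s_def w_def\<close>)
    qed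
    have dG: "(G has_derivative (\<lambda>h. c *\<^sub>R h)) (at 0)"
    proof -
      have "(G has_derivative (\<lambda>h. h + (1 / s) *\<^sub>R (\<Sum>j=1..n. - h + ((\<alpha>+1) * (w j \<bullet> h)) *\<^sub>R w j))) (at 0)"
        unfolding G_def w_def
        by (auto intro!: derivative_eq_intros dg0)
      moreover have "(\<lambda>h. h + (1 / s) *\<^sub>R (\<Sum>j=1..n. - h + ((\<alpha>+1) * (w j \<bullet> h)) *\<^sub>R w j)) = (\<lambda>h. c *\<^sub>R h)"
      proof
        fix h
        have "(\<Sum>j=1..n. - h + ((\<alpha>+1) * (w j \<bullet> h)) *\<^sub>R w j)
           = - (of_nat n * h) + (\<alpha>+1) *\<^sub>R (\<Sum>j=1..n. (w j \<bullet> h) *\<^sub>R w j)"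
          by (simp add: sum.distrib scaleR_sum_right sum_subtractf)
        also have "(\<Sum>j=1..n. (w j \<bullet> h) *\<^sub>R w j) = (real n / 2) *\<^sub>R h"
          unfolding w_def using key_id[OF n3] .
        finally have E: "(\<Sum>j=1..n. - h + ((\<alpha>+1) * (w j \<bullet> h)) *\<^sub>R w j)
           = - (of_nat n * h) + (\<alpha>+1) *\<^sub>R ((real n / 2) *\<^sub>R h)" .
        show "h + (1 / s) *\<^sub>R (\<Sum>j=1..n. - h + ((\<alpha>+1) * (w j \<bullet> h)) *\<^sub>R w j) = c *\<^sub>R h"
          unfolding E using spos by (simp add: c_def complex_eq_iff field_simps)
      qed
      ultimately show ?thesis by simp
    qed
    show "\<exists>G :: complex \<Rightarrow> complex. \<exists>c :: real. c > 0 \<and>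
           (\<forall>\<^sub>F u in nhds 0. (maxwellV n \<alpha> 0 has_derivative (\<lambda>h. G u \<bullet> h)) (at u)) \<and>
           (G has_derivative (\<lambda>h. c *\<^sub>R h)) (at 0)"
      using cpos ev dG by blast
  qed
qed

end
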